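(* Let $r\in\mathbb{R}\setminus\{0\}$ and let $F$ be a distribution function on $\mathbb{R}$ with a density $f$ that is $(-r+1)$-decreasing with threshold $t^*(-r+1)$. If $r<0$, then $z\mapsto F(z^{1/r})$ is concave on $(0,(t^*(-r+1))^r)$; if $r>0$, then $z\mapsto F(z^{1/r})$ is concave on $((t^*(-r+1))^r,+\infty)$. In particular, $F$ is $r$-revealed-concave with threshold $t^{**}(r)=(t^*(-r+1))^r$.
   Context: A function $f:\mathbb{R}\to\mathbb{R}$ is $\alpha$-decreasing ($\alpha\in\mathbb{R}$) with threshold $t^*(\alpha)>0$ if $f$ is continuous on $(0,\infty)$ and $t\mapsto t^\alpha f(t)$ is strictly decreasing for all $t>t^*(\alpha)$. A function $F$ is $r$-revealed-concave with threshold $t^{**}(r)>0$ if: for $r<0$, $t\mapsto F(t^{1/r})$ is concave on $(0,t^{**}(r)]$; for $r=0$, $t\mapsto F(e^t)$ is concave on $[t^{**}(r),\infty)$; for $r>0$, $t\mapsto F(t^{1/r})$ is concave on $[t^{**}(r),\infty)$. *)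

theory Defs
  imports "HOL-Analysis.Analysis" "HOL-Probability.Probability"
begin

definition has_density :: "(real \<Rightarrow> real) \<Rightarrow> (real \<Rightarrow> real) \<Rightarrow> bool" where
  "has_density F f \<longleftrightarrow>
     f \<in> borel_measurable lborel \<and> (\<forall>x. 0 \<le> f x) \<and> integrable lborel f \<and>
     integral\<^sup>L lborel f = 1 \<and>
     (\<forall>x. F x = (LINT t:{..x}|lborel. f t))"

definition alpha_decreasing :: "real \<Rightarrow> real \<Rightarrow> (real \<Rightarrow> real) \<Rightarrow> bool" where
  "alpha_decreasing \<alpha> tstar f \<longleftrightarrow>
     0 < tstar \<and> continuous_on {0<..} f \<and>
     (\<forall>s t. tstar < s \<and> s < t \<longrightarrow> t powr \<alpha> * f t < s powr \<alpha> * f s)"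

definition revealed_concave :: "real \<Rightarrow> real \<Rightarrow> (real \<Rightarrow> real) \<Rightarrow> bool" where
  "revealed_concave r tss F \<longleftrightarrow>
     0 < tss \<and>
     (if r < 0 then concave_on {0<..tss} (\<lambda>t. F (t powr (1 / r)))
      else if r = 0 then concave_on {tss..} (\<lambda>t. F (exp t))
      else concave_on {tss..} (\<lambda>t. F (t powr (1 / r))))"

end

theory Submission
  imports Defs
begin

lemma F_split:
  assumes hd: "has_density F f" and ab: "a \<le> u"
  shows "F u = F a + integral {a..u} f"
proof -
  have meas: "f \<in> borel_measurable lborel" and int: "integrable lborel f"
    and Fdef: "\<And>x. F x = (LINT t:{..x}|lborel. f t)"
    using hd unfolding has_density_def by auto
  have si: "set_integrable lborel A f" if "A \<in> sets lborel" for A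
    unfolding set_integrable_def using integrable_mult_indicator[OF that int] .
  have e1: "{..u} = {..<a} \<union> {a..u}" using ab by auto
  have e2: "{..a} = {..<a} \<union> {a..a}" by auto
  have "F u = (LINT t:{..<a}|lborel. f t) + (LINT t:{a..u}|lborel. f t)"
    unfolding Fdef e1 by (rule set_integral_Un) (auto intro!: si)
  moreover have "F a = (LINT t:{..<a}|lborel. f t) + (LINT t:{a..a}|lborel. f t)"
    unfolding Fdef e2 by (rule set_integral_Un) (auto intro!: si)
  moreover have "(LINT t:{a..u}|lborel. f t) = integral {a..u} f"
    by (rule set_borel_integral_eq_integral) (auto intro!: si)
  moreover have "(LINT t:{a..a}|lborel. f t) = integral {a..a} f"
    by (rule set_borel_integral_eq_integral) (auto intro!: si)
  ultimately show ?thesis by simp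
qed

lemma F_deriv:
  assumes hd: "has_density F f" and fc: "continuous_on {0<..} f" and x: "x > 0"
  shows "(F has_real_derivative f x) (at x)"
proof -
  define a where "a = x / 2"
  define b where "b = 2 * x"
  have ax: "a < x" "x < b" "0 < a" using x by (auto simp: a_def b_def)
  have "continuous_on {a..b} f"
    by (rule continuous_on_subset[OF fc]) (use ax in auto)
  then have "((\<lambda>u. integral {a..u} f) has_real_derivative f x) (at x within {a..b})"
    by (rule integral_has_real_derivative) (use ax in auto)
  then have "((\<lambda>u. integral {a..u} f) has_real_derivative f x) (at x)"
    using at_within_Icc_at[OF ax(1,2)] by simp
  then have "((\<lambda>u. F a + integral {a..u} f) has_real_derivative f x) (at x)"
    by (auto intro!: derivative_eq_intros)
  then show ?thesis
  proof (rule has_field_derivative_transform_within_open[where S="{a<..<b}"])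
    fix y assume "y \<in> {a<..<b}"
    then show "F a + integral {a..y} f = F y" using F_split[OF hd, of a y] by simp
  qed (use ax in auto)
qed

lemma h_mono:
  assumes ad: "alpha_decreasing (- r + 1) tstar f"
    and st: "tstar \<le> s" "s \<le> t"
  shows "t powr (- r + 1) * f t \<le> s powr (- r + 1) * f s"
proof -
  define h where "h = (\<lambda>t. t powr (- r + 1) * f t)"
  have tp: "0 < tstar" and fc: "continuous_on {0<..} f"
    and dec: "\<And>s t. tstar < s \<Longrightarrow> s < t \<Longrightarrow> h t < h s"
    using ad unfolding alpha_decreasing_def h_def by auto
  have "h t \<le> h s"
  proof (cases "s = t")
    case True then show ?thesis by simp
  next
    case False
    then have st': "s < t" using st by simp
    show ?thesis
    proof (cases "tstar < s")
      case True then show ?thesis using dec st' by (simp add: less_imp_le)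
    next
      case False
      then have s: "s = tstar" using st by simp
      show ?thesis
      proof (rule ccontr)
        assume "\<not> h t \<le> h s"
        then have lt: "h s < h t" by simp
        have "isCont f s"
          using fc tp s continuous_on_eq_continuous_at[of "{0<..}" f] by auto
        then have "isCont h s" unfolding h_def using tp s
          by (auto intro!: continuous_intros)
        then have "(h \<longlongrightarrow> h s) (at_right s)"
          by (simp add: isCont_def filterlim_at_split)
        then have "eventually (\<lambda>y. h y < h t) (at_right s)"
          using lt order_tendstoD(2) by blast
        then have "\<exists>b>s. \<forall>y>s. y < b \<longrightarrow> h y < h t"
          by (simp add: eventually_at_right_field)
        then obtain b where b: "b > s" "\<And>y. y > s \<Longrightarrow> y < b \<Longrightarrow> h y < h t"
          by blast
        obtain c where c: "s < c" "c \<le> b" "c \<le> t" using b st' by (metis min.cobounded1 min.cobounded2 min_less_iff_conj)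
        define y where "y = (s + c) / 2"
        have y1: "s < y" using c unfolding y_def by simp
        have y2: "y < b" using c unfolding y_def by simp
        have y3: "y < t" using c unfolding y_def by simp
        note y = y1 y2 y3
        have "h y < h t" using b y by auto
        moreover have "h t < h y" using dec y s by auto
        ultimately show False by simp
      qed
    qed
  qed
  then show ?thesis unfolding h_def .
qed

lemma G_deriv:
  assumes hd: "has_density F f" and fc: "continuous_on {0<..} f" and z: "z > 0"
    and r: "r \<noteq> 0"
  shows "((\<lambda>z. F (z powr (1 / r))) has_real_derivative
          (1 / r) * ((z powr (1 / r)) powr (- r + 1) * f (z powr (1 / r)))) (at z)"
proof -
  have pz: "z powr (1 / r) > 0" using z by simp
  have "((\<lambda>z. F (z powr (1 / r))) has_real_derivative
          f (z powr (1 / r)) * ((1 / r) * z powr (1 / r - 1))) (at z)"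
    by (rule DERIV_chain2[OF F_deriv[OF hd fc pz] has_real_derivative_powr[OF z]])
  moreover have "(z powr (1 / r)) powr (- r + 1) = z powr (1 / r - 1)"
    using r by (simp add: powr_powr field_simps)
  ultimately show ?thesis by (simp add: mult_ac)
qed

lemma concave_main:
  assumes hd: "has_density F f" and ad: "alpha_decreasing (- r + 1) tstar f"
    and r: "r \<noteq> 0" and A: "connected A" "A \<subseteq> {0<..}"
    and At: "\<And>z. z \<in> A \<Longrightarrow> tstar \<le> z powr (1 / r)"
  shows "concave_on A (\<lambda>z. F (z powr (1 / r)))"
proof -
  define h where "h = (\<lambda>t. t powr (- r + 1) * f t)"
  have fc: "continuous_on {0<..} f" and tp: "0 < tstar"
    using ad unfolding alpha_decreasing_def by auto
  have "convex_on A (\<lambda>z. - F (z powr (1 / r)))"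
  proof (rule convex_on_realI[where f'="\<lambda>z. - ((1 / r) * h (z powr (1 / r)))"])
    show "connected A" by (rule A)
  next
    fix x assume "x \<in> A"
    then have "x > 0" using A by auto
    then show "((\<lambda>z. - F (z powr (1 / r))) has_real_derivative - ((1 / r) * h (x powr (1 / r)))) (at x)"
      unfolding h_def by (intro DERIV_minus G_deriv[OF hd fc _ r])
  next
    fix x y assume xy: "x \<in> A" "y \<in> A" "x \<le> y"
    have x0: "x > 0" using xy A by auto
    have tx: "tstar \<le> x powr (1 / r)" "tstar \<le> y powr (1 / r)" using At xy by auto
    show "- ((1 / r) * h (x powr (1 / r))) \<le> - ((1 / r) * h (y powr (1 / r)))"
    proof (cases "r > 0")
      case True
      have "x powr (1 / r) \<le> y powr (1 / r)" using True x0 xy by (intro powr_mono2) auto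
      then have "h (y powr (1 / r)) \<le> h (x powr (1 / r))"
        unfolding h_def using h_mono[OF ad tx(1)] by blast
      then show ?thesis using True by (simp add: divide_right_mono)
    next
      case False
      then have rn: "r < 0" using r by simp
      have "y powr (1 / r) \<le> x powr (1 / r)" using rn x0 xy by (intro powr_mono2') auto
      then have "h (x powr (1 / r)) \<le> h (y powr (1 / r))"
        unfolding h_def using h_mono[OF ad tx(2)] by blast
      then show ?thesis using rn by (simp add: divide_right_mono_neg)
    qed
  qed
  then show ?thesis by (simp add: concave_on_def)
qed

theorem lemma2p8:
  fixes r tstar :: real and F f :: "real \<Rightarrow> real"
  assumes "r \<noteq> 0"
    and "has_density F f"
    and "alpha_decreasing (- r + 1) tstar f"
  shows "(r < 0 \<longrightarrow> concave_on {0<..<tstar powr r} (\<lambda>z. F (z powr (1 / r))))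
       \<and> (r > 0 \<longrightarrow> concave_on {tstar powr r<..} (\<lambda>z. F (z powr (1 / r))))
       \<and> revealed_concave r (tstar powr r) F"
proof -
  have tp: "0 < tstar" using assms(3) unfolding alpha_decreasing_def by auto
  have bk: "(tstar powr r) powr (1 / r) = tstar" using tp assms(1) by (simp add: powr_powr)
  have neg: "concave_on {0<..tstar powr r} (\<lambda>z. F (z powr (1 / r)))" if rn: "r < 0"
  proof (rule concave_main[OF assms(2,3,1)])
    show "connected {0<..tstar powr r}" by simp
    show "{0<..tstar powr r} \<subseteq> {0<..}" by auto
    fix z assume "z \<in> {0<..tstar powr r}"
    then have "z > 0" "z \<le> tstar powr r" by auto
    then have "(tstar powr r) powr (1 / r) \<le> z powr (1 / r)"
      using rn by (intro powr_mono2') auto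
    then show "tstar \<le> z powr (1 / r)" using bk by simp
  qed
  have pos: "concave_on {tstar powr r..} (\<lambda>z. F (z powr (1 / r)))" if rp: "r > 0"
  proof (rule concave_main[OF assms(2,3,1)])
    show "connected {tstar powr r..}" by simp
    show "{tstar powr r..} \<subseteq> {0<..}" using tp
      by (auto intro: less_le_trans[of 0 "tstar powr r"])
    fix z assume "z \<in> {tstar powr r..}"
    then have "z \<ge> tstar powr r" by auto
    then have "(tstar powr r) powr (1 / r) \<le> z powr (1 / r)"
      using rp tp by (intro powr_mono2) auto
    then show "tstar \<le> z powr (1 / r)" using bk by simp
  qed
  have "r < 0 \<longrightarrow> concave_on {0<..<tstar powr r} (\<lambda>z. F (z powr (1 / r)))"
    using neg by (auto simp: concave_on_def intro: convex_on_subset)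
  moreover have "r > 0 \<longrightarrow> concave_on {tstar powr r<..} (\<lambda>z. F (z powr (1 / r)))"
    using pos by (auto simp: concave_on_def intro: convex_on_subset)
  moreover have "revealed_concave r (tstar powr r) F"
    unfolding revealed_concave_def using neg pos tp assms(1) by auto
  ultimately show ?thesis by blast
qed

end
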